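(* If a topological space $X$ is $\alpha_1$, then for each $x\in X$, player ONE does not have a winning strategy in the game $\alpha^{\mathrm{game}}(X,x)$.
   Context: Convention: a "sequence" is a countably infinite set; a countably infinite set $A$ converges to $x$ if $x\notin A$ and every neighborhood of $x$ contains all but finitely many elements of $A$. $X$ is $\alpha_1$ if for each $x\in X$ and all pairwise disjoint sequences $S_1,S_2,\dots\subseteq X$ each converging to $x$, there is a sequence $S\subseteq\bigcup_nS_n$ converging to $x$ such that $S_n\setminus S$ is finite for all $n$. The game $\alpha^{\mathrm{game}}(X,x)$: in the $n$-th inning ONE chooses a sequence $S_n\subseteq X$ converging to $x$, TWO responds with an infinite $T_n\subseteq S_n$; TWO wins if $\bigcup_nT_n$ converges to $x$, otherwise ONE wins. *)

theory Defs
  imports "HOL-Analysis.Analysis"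
begin

definition converges_to :: "'a topology \<Rightarrow> 'a set \<Rightarrow> 'a \<Rightarrow> bool" where
  "converges_to X A x \<longleftrightarrow>
     A \<subseteq> topspace X \<and> countable A \<and> infinite A \<and> x \<notin> A \<and>
     (\<forall>U. openin X U \<and> x \<in> U \<longrightarrow> finite (A - U))"

definition alpha1 :: "'a topology \<Rightarrow> bool" where
  "alpha1 X \<longleftrightarrow>
     (\<forall>x \<in> topspace X. \<forall>S :: nat \<Rightarrow> 'a set.
        (\<forall>n. converges_to X (S n) x) \<and> (\<forall>m n. m \<noteq> n \<longrightarrow> S m \<inter> S n = {}) \<longrightarrow>
        (\<exists>T. T \<subseteq> (\<Union>n. S n) \<and> converges_to X T x \<and> (\<forall>n. finite (S n - T))))"

text \<open>A strategy for ONE in the game alpha-game(X,x) maps the finite history of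
  TWO's previous moves [T_0, ..., T_{n-1}] to ONE's move S_n in inning n.
  (ONE's own earlier moves are determined by the strategy and this history.)\<close>
type_synonym 'a one_strategy = "'a set list \<Rightarrow> 'a set"

definition legal_history :: "'a one_strategy \<Rightarrow> 'a set list \<Rightarrow> bool" where
  "legal_history \<sigma> h \<longleftrightarrow>
     (\<forall>k < length h. infinite (h ! k) \<and> h ! k \<subseteq> \<sigma> (take k h))"

definition legal_play :: "'a one_strategy \<Rightarrow> (nat \<Rightarrow> 'a set) \<Rightarrow> bool" where
  "legal_play \<sigma> T \<longleftrightarrow> (\<forall>n. infinite (T n) \<and> T n \<subseteq> \<sigma> (map T [0..<n]))"

definition one_winning_strategy :: "'a topology \<Rightarrow> 'a \<Rightarrow> 'a one_strategy \<Rightarrow> bool" where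
  "one_winning_strategy X x \<sigma> \<longleftrightarrow>
     (\<forall>h. legal_history \<sigma> h \<longrightarrow> converges_to X (\<sigma> h) x) \<and>
     (\<forall>T. legal_play \<sigma> T \<longrightarrow> \<not> converges_to X (\<Union>n. T n) x)"

end

theory Submission
  imports Defs
begin

lemma conv_subset:
  assumes "converges_to X A x" "B \<subseteq> A" "infinite B"
  shows "converges_to X B x"
  using assms unfolding converges_to_def
  by (meson countable_subset finite_subset Diff_mono subset_iff order_refl)

lemma conv_Un:
  assumes "converges_to X A x" "converges_to X B x"
  shows "converges_to X (A \<union> B) x"
  using assms unfolding converges_to_def
  by (auto simp: Un_Diff)

lemma conv_UN_finite:
  assumes "finite I" "I \<noteq> {}" "\<forall>i\<in>I. converges_to X (S i) x"
  shows "converges_to X (\<Union>i\<in>I. S i) x"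
  using assms
proof (induction I rule: finite_ne_induct)
  case (singleton y) then show ?case by simp
next
  case (insert y F) then show ?case using conv_Un[of X "S y" x "\<Union>i\<in>F. S i"] by simp
qed

lemma alpha1_gen:
  assumes a: "alpha1 X" and xX: "x \<in> topspace X" and S: "\<forall>n::nat. converges_to X (S n) x"
  shows "\<exists>T. T \<subseteq> (\<Union>n. S n) \<and> converges_to X T x \<and> (\<forall>n. finite (S n - T))"
proof -
  define D where "D n = S n - (\<Union>m<n. S m)" for n
  have Dsub: "D n \<subseteq> S n" for n unfolding D_def by auto
  have Scov: "S n \<subseteq> (\<Union>m\<le>n. D m)" for n
  proof
    fix y assume y: "y \<in> S n"
    define m where "m = (LEAST m. y \<in> S m)"
    have m1: "y \<in> S m" unfolding m_def using y by (rule LeastI)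
    have m2: "m \<le> n" unfolding m_def using y by (rule Least_le)
    have "y \<notin> S k" if "k < m" for k using not_less_Least[of k "\<lambda>m. y \<in> S m"] that m_def by simp
    then have "y \<in> D m" using m1 unfolding D_def by auto
    then show "y \<in> (\<Union>m\<le>n. D m)" using m2 by auto
  qed
  have Ddisj: "D i \<inter> D j = {}" if "i \<noteq> j" for i j
  proof -
    have *: "D i \<inter> D j = {}" if "i < j" for i j :: nat
      using that unfolding D_def by auto
    show ?thesis
    proof (cases "i < j")
      case True then show ?thesis using * by blast
    next
      case False then have "j < i" using that by simp
      then show ?thesis using *[of j i] by blast
    qed
  qed
  define N where "N = {n. infinite (D n)}"
  obtain T where T1: "T \<subseteq> (\<Union>n. S n)" and T2: "converges_to X T x"
    and T3: "\<forall>m. finite (D m - T)"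
  proof (cases "finite N")
    case True
    define M where "M = Max (insert 0 N)"
    have NM: "n \<in> N \<Longrightarrow> n \<le> M" for n unfolding M_def using True by simp
    define T0 where "T0 = (\<Union>m\<in>{..M}. S m)"
    have "converges_to X T0 x" unfolding T0_def
      by (rule conv_UN_finite) (use S in auto)
    moreover have "T0 \<subseteq> (\<Union>n. S n)" unfolding T0_def by auto
    moreover have "finite (D m - T0)" for m
    proof (cases "m \<le> M")
      case True then have "D m \<subseteq> T0" using Dsub[of m] unfolding T0_def by auto
      then have "D m - T0 = {}" by blast
      then show ?thesis by (simp only: finite.emptyI)
    next
      case False then have "m \<notin> N" using NM by force
      then show ?thesis unfolding N_def by simp
    qed
    ultimately show ?thesis using that by blast
  next
    case False
    define e where "e = enumerate N"
    have eN: "e k \<in> N" for k unfolding e_def using False by (rule enumerate_in_set)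
    have einj: "e i \<noteq> e j" if "i \<noteq> j" for i j
      using inj_enumerate[OF False] that unfolding e_def inj_on_def by blast
    have "\<forall>n. converges_to X (D (e n)) x"
    proof
      fix n have "infinite (D (e n))" using eN[of n] unfolding N_def by simp
      then show "converges_to X (D (e n)) x" using conv_subset[OF _ Dsub] S by blast
    qed
    moreover have "\<forall>m n. m \<noteq> n \<longrightarrow> D (e m) \<inter> D (e n) = {}" using Ddisj einj by blast
    moreover have A1: "\<forall>S :: nat \<Rightarrow> 'a set.
        (\<forall>n. converges_to X (S n) x) \<and> (\<forall>m n. m \<noteq> n \<longrightarrow> S m \<inter> S n = {}) \<longrightarrow>
        (\<exists>T. T \<subseteq> (\<Union>n. S n) \<and> converges_to X T x \<and> (\<forall>n. finite (S n - T)))"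
      using a xX unfolding alpha1_def by (rule bspec)
    ultimately obtain T where T: "T \<subseteq> (\<Union>n. D (e n))" "converges_to X T x" "\<forall>n. finite (D (e n) - T)"
      using A1[rule_format, of "\<lambda>n. D (e n)"] by blast
    have "T \<subseteq> (\<Union>n. S n)" using T(1) Dsub by blast
    moreover have "finite (D m - T)" for m
    proof (cases "m \<in> N")
      case True then obtain k where "e k = m" unfolding e_def using enumerate_Ex[OF False True] by blast
      then show ?thesis using T(3) by blast
    next
      case False then show ?thesis unfolding N_def by simp
    qed
    ultimately show ?thesis using that T(2) by blast
  qed
  have "finite (S n - T)" for n
  proof -
    have "S n - T \<subseteq> (\<Union>m\<le>n. D m - T)" using Scov[of n] by blast
    moreover have "finite (\<Union>m\<le>n. D m - T)" using T3 by (intro finite_UN_I) auto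
    ultimately show ?thesis by (rule finite_subset)
  qed
  then show ?thesis using T1 T2 by blast
qed

primrec Htree :: "'a one_strategy \<Rightarrow> nat \<Rightarrow> 'a set list set" where
  "Htree \<sigma> 0 = {[]}"
| "Htree \<sigma> (Suc n) = (\<Union>h\<in>Htree \<sigma> n. (\<lambda>F. h @ [\<sigma> h - F]) ` {F. finite F \<and> F \<subseteq> \<sigma> h})"

primrec hist :: "'a one_strategy \<Rightarrow> 'a set \<Rightarrow> nat \<Rightarrow> 'a set list" where
  "hist \<sigma> T 0 = []"
| "hist \<sigma> T (Suc n) = hist \<sigma> T n @ [\<sigma> (hist \<sigma> T n) \<inter> T]"

lemma hist_length[simp]: "length (hist \<sigma> T n) = n"
  by (induction n) auto

lemma hist_map: "map (\<lambda>k. \<sigma> (hist \<sigma> T k) \<inter> T) [0..<n] = hist \<sigma> T n"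
  by (induction n) auto

theorem proposition2p12:
  fixes X :: "'a topology"
  assumes "alpha1 X"
  shows "\<forall>x \<in> topspace X. \<not> (\<exists>\<sigma>. one_winning_strategy X x \<sigma>)"
proof (intro ballI notI, elim exE)
  fix x \<sigma> assume xX: "x \<in> topspace X" and w: "one_winning_strategy X x \<sigma>"
  have conv: "legal_history \<sigma> h \<Longrightarrow> converges_to X (\<sigma> h) x" for h
    using w unfolding one_winning_strategy_def by blast
  have Hleg: "h \<in> Htree \<sigma> n \<Longrightarrow> legal_history \<sigma> h \<and> length h = n" for h n
  proof (induction n arbitrary: h)
    case 0 then show ?case by (simp add: legal_history_def)
  next
    case (Suc n)
    then obtain g F where g: "g \<in> Htree \<sigma> n" "finite F" "F \<subseteq> \<sigma> g" and h: "h = g @ [\<sigma> g - F]" by auto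
    have gl: "legal_history \<sigma> g" "length g = n" using Suc.IH[OF g(1)] by auto
    have "infinite (\<sigma> g)" using conv[OF gl(1)] unfolding converges_to_def by blast
    then have inf: "infinite (\<sigma> g - F)" using g(2) by simp
    have "legal_history \<sigma> h" unfolding legal_history_def
    proof (intro allI impI)
      fix k assume "k < length h"
      then have "k < length g \<or> k = length g" using h by auto
      then show "infinite (h ! k) \<and> h ! k \<subseteq> \<sigma> (take k h)"
      proof
        assume k: "k < length g"
        then show ?thesis using gl(1) unfolding legal_history_def h by (simp add: nth_append)
      next
        assume k: "k = length g"
        then show ?thesis using inf h by auto
      qed
    qed
    then show ?case using h gl by simp
  qed
  have Hcount: "countable (Htree \<sigma> n)" for n
  proof (induction n)
    case 0 then show ?case by simp
  next
    case (Suc n)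
    have "countable (\<sigma> h)" if "h \<in> Htree \<sigma> n" for h
      using conv Hleg that unfolding converges_to_def by blast
    then have "countable (\<Union>h\<in>Htree \<sigma> n. (\<lambda>F. h @ [\<sigma> h - F]) ` {F. finite F \<and> F \<subseteq> \<sigma> h})"
      by (intro countable_UN[OF Suc.IH] countable_image countable_Collect_finite_subset) blast
    then show ?case by simp
  qed
  define \<S> where "\<S> = \<sigma> ` (\<Union>n. Htree \<sigma> n)"
  have Sc: "countable \<S>" unfolding \<S>_def using Hcount by auto
  have Sne: "\<S> \<noteq> {}" unfolding \<S>_def using Htree.simps(1)[of \<sigma>] by blast
  have Sconv: "\<forall>A\<in>\<S>. converges_to X A x" unfolding \<S>_def using Hleg conv by blast
  define f where "f = from_nat_into \<S>"
  have rf: "range f = \<S>" unfolding f_def using Sc Sne by simp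
  obtain T where T1: "converges_to X T x" and T2: "\<forall>n. finite (f n - T)"
    using alpha1_gen[OF assms xX, of f] Sconv rf by blast
  have TS: "finite (A - T)" if "A \<in> \<S>" for A using T2 rf that by blast
  have hH: "hist \<sigma> T n \<in> Htree \<sigma> n" for n
  proof (induction n)
    case 0 then show ?case by simp
  next
    case (Suc n)
    let ?g = "hist \<sigma> T n"
    have "finite (\<sigma> ?g - T)" using TS Suc unfolding \<S>_def by blast
    moreover have "\<sigma> ?g \<inter> T = \<sigma> ?g - (\<sigma> ?g - T)" by blast
    ultimately have "?g @ [\<sigma> ?g \<inter> T] \<in> (\<lambda>F. ?g @ [\<sigma> ?g - F]) ` {F. finite F \<and> F \<subseteq> \<sigma> ?g}"
      by (intro image_eqI[of _ _ "\<sigma> ?g - T"]) auto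
    then show ?case using Suc.IH by auto
  qed
  define P where "P k = \<sigma> (hist \<sigma> T k) \<inter> T" for k
  have Pinf: "infinite (P n)" for n
  proof -
    have "infinite (\<sigma> (hist \<sigma> T n))" using conv Hleg[OF hH] unfolding converges_to_def by blast
    moreover have "finite (\<sigma> (hist \<sigma> T n) - T)" using TS hH unfolding \<S>_def by blast
    moreover have "P n = \<sigma> (hist \<sigma> T n) - (\<sigma> (hist \<sigma> T n) - T)" unfolding P_def by blast
    ultimately show ?thesis by simp
  qed
  have mP: "map P [0..<n] = hist \<sigma> T n" for n
    unfolding P_def by (rule hist_map)
  have "legal_play \<sigma> P" unfolding legal_play_def
  proof
    fix n show "infinite (P n) \<and> P n \<subseteq> \<sigma> (map P [0..<n])"
      using Pinf[of n] unfolding mP by (simp add: P_def)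
  qed
  then have nc: "\<not> converges_to X (\<Union>n. P n) x" using w unfolding one_winning_strategy_def by blast
  have "converges_to X (\<Union>n. P n) x"
  proof (rule conv_subset[OF T1])
    show "(\<Union>n. P n) \<subseteq> T" unfolding P_def by auto
    show "infinite (\<Union>n. P n)" proof
    assume "finite (\<Union>n. P n)"
    moreover have "P 0 \<subseteq> (\<Union>n. P n)" by blast
    ultimately have "finite (P 0)" by (rule finite_subset[rotated])
    then show False using Pinf[of 0] by simp
  qed
  qed
  then show False using nc by simp
qed

end
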